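(* Let $d\ge 1$ be an integer and consider the $d$-dimensional Parallel Random Apollonian Network (P-RAN) process described in the context. For an integer $m\ge 0$ let $Nc_t(m)$ be the number of $(d+1)$-cliques in the list $C_t$ having parallel degree $m$ after $t$ steps, and let $|C_t| = d+2+t(d+1)$ be the total number of cliques in $C_t$. Then for every $m\ge 0$, the fraction $\mathbb{E}[Nc_t(m)]/|C_t|$ converges as $t\to\infty$ to $$Pc(m)=\frac{d+1}{(d+2)^{m+1}},$$ i.e. for large $t$ the parallel degree distribution of the P-RAN asymptotically follows this geometric distribution.
   Context: P-RAN process in dimension $d$: at step $t=0$ the graph is a complete graph on $d+2$ vertices, and the list $C_0$ consists of its $d+2$ $(d+1)$-cliques (vertex subsets of size $d+1$). At each step $t\to t+1$, a clique $c$ is chosen uniformly at random from the current list $C_t$; a new vertex $v$ is added to the graph and joined by edges to all $d+1$ vertices of $c$; the clique $c$ stays in the list and the $d+1$ new $(d+1)$-cliques of the form $\{v\}\cup (c\setminus\{u\})$, $u\in c$, are appended to the list. Thus $|C_t|=d+2+t(d+1)$ and the graph has $d+2+t$ vertices. The parallel degree of a clique $c$ in the list is the number of vertices that have been inserted into $c$ (i.e. the number of steps at which $c$ was the chosen clique); newly created cliques have parallel degree $0$. *)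

theory Defs
  imports "HOL-Probability.Probability"
begin

text \<open>State of the P-RAN process: (number of vertices n, edge set, clique list).
  Vertices are 0..<n; an edge is a 2-element set of vertices; the clique list
  is a list of pairs (vertex set of a (d+1)-clique, its parallel degree).\<close>
type_synonym pran_state = "nat \<times> nat set set \<times> (nat set \<times> nat) list"

definition pran_init :: "nat \<Rightarrow> pran_state" where
  "pran_init d = (d + 2, {{x, y} | x y. x < d + 2 \<and> y < d + 2 \<and> x \<noteq> y},
     map (\<lambda>u. ({0..<d+2} - {u}, 0)) [0..<d+2])"

definition pran_step :: "pran_state \<Rightarrow> pran_state pmf" where
  "pran_step s = (case s of (n, E, L) \<Rightarrow>
     map_pmf (\<lambda>i. (case L ! i of (c, k) \<Rightarrow>
        (Suc n, E \<union> {{n, u} | u. u \<in> c},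
         L[i := (c, Suc k)] @ map (\<lambda>u. (insert n (c - {u}), 0)) (sorted_list_of_set c))))
       (pmf_of_set {..<length L}))"

primrec pran :: "nat \<Rightarrow> nat \<Rightarrow> pran_state pmf" where
  "pran d 0 = return_pmf (pran_init d)"
| "pran d (Suc t) = pran d t \<bind> pran_step"

definition Nc :: "nat \<Rightarrow> pran_state \<Rightarrow> nat" where
  "Nc m s = length (filter (\<lambda>ck. snd ck = m) (snd (snd s)))"

end

theory Submission imports Defs begin

lemma len_filter_upd0: "i < length xs \<Longrightarrow> length (filter P (xs[i:=x])) + (if P (xs!i) then 1 else 0) = length (filter P xs) + (if P x then 1 else 0)"
proof (induction xs arbitrary: i)
  case (Cons a xs)
  show ?case
  proof (cases i)
    case 0 then show ?thesis by simp
  next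
    case (Suc j)
    then have "j < length xs" using Cons.prems by simp
    from Cons.IH[OF this] show ?thesis using Suc by simp
  qed
qed simp

lemma len_filter_upd: "i < length xs \<Longrightarrow> real (length (filter P (xs[i:=x]))) = real (length (filter P xs)) - (if P (xs!i) then 1 else 0) + (if P x then 1 else 0)"
  using len_filter_upd0[of i xs P x] by (auto split: if_splits)

lemma sum_ind: "(\<Sum>i<length xs. if P (xs!i) then 1 else 0 :: real) = real (length (filter P xs))"
  by (induction xs) (auto simp: sum.lessThan_Suc_shift simp del: sum.lessThan_Suc)

definition pinv :: "nat \<Rightarrow> nat \<Rightarrow> pran_state \<Rightarrow> bool" where
 "pinv d t s \<longleftrightarrow> fst s = d+2+t \<and> length (snd (snd s)) = d+2+t*(d+1) \<and>
    (\<forall>ck\<in>set (snd (snd s)). fst ck \<subseteq> {0..<fst s} \<and> card (fst ck) = d+1)"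

lemma set_step:
  assumes "pinv d t (n,E,L)"
  shows "set_pmf (pran_step (n,E,L)) = (\<lambda>i. (case L ! i of (c, k) \<Rightarrow>
        (Suc n, E \<union> {{n, u} | u. u \<in> c},
         L[i := (c, Suc k)] @ map (\<lambda>u. (insert n (c - {u}), 0)) (sorted_list_of_set c)))) ` {..<length L}"
proof -
  have "{..<length L} \<noteq> {}" using assms by (auto simp: pinv_def)
  then show ?thesis unfolding pran_step_def by simp
qed

lemma inv_step:
  assumes "pinv d t s" "s' \<in> set_pmf (pran_step s)"
  shows "pinv d (Suc t) s'"
proof -
  obtain n E L where s: "s = (n,E,L)" by (cases s) auto
  from assms(2) obtain i where i: "i < length L" and s': "s' = (case L ! i of (c, k) \<Rightarrow>
        (Suc n, E \<union> {{n, u} | u. u \<in> c},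
         L[i := (c, Suc k)] @ map (\<lambda>u. (insert n (c - {u}), 0)) (sorted_list_of_set c)))"
    using set_step[OF assms(1)[unfolded s]] s by auto
  obtain c k where ck: "L ! i = (c,k)" by (cases "L!i") auto
  have mem: "(c,k) \<in> set L" using ck i by (metis nth_mem)
  have inv: "n = d+2+t" "length L = d+2+t*(d+1)" "\<And>c' k'. (c',k') \<in> set L \<Longrightarrow> c' \<subseteq> {0..<n} \<and> card c' = d+1"
    using assms(1) s unfolding pinv_def by fastforce+
  have cs: "c \<subseteq> {0..<n}" "card c = d+1" using inv(3)[OF mem] by auto
  have fc: "finite c" using cs(1) finite_subset by blast
  have nc: "n \<notin> c" using cs(1) by auto
  have A: "\<And>c' k'. (c',k') \<in> set (L[i := (c, Suc k)]) \<Longrightarrow> c' \<subseteq> {0..<Suc n} \<and> card c' = d+1"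
  proof -
    fix c' k' assume "(c',k') \<in> set (L[i := (c, Suc k)])"
    then have "(c',k') \<in> insert (c, Suc k) (set L)" using set_update_subset_insert by fastforce
    then have "c' \<subseteq> {0..<n} \<and> card c' = d+1" using inv(3) cs by auto
    then show "c' \<subseteq> {0..<Suc n} \<and> card c' = d+1" by auto
  qed
  have B: "\<And>u. u \<in> c \<Longrightarrow> insert n (c - {u}) \<subseteq> {0..<Suc n} \<and> card (insert n (c - {u})) = d+1"
  proof -
    fix u assume u: "u \<in> c"
    have "card (insert n (c - {u})) = Suc (card (c - {u}))" using fc nc by simp
    also have "\<dots> = d+1" using u fc cs(2) by (simp add: card_Diff_singleton)
    finally show "insert n (c - {u}) \<subseteq> {0..<Suc n} \<and> card (insert n (c - {u})) = d+1"
      using cs(1) by auto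
  qed
  have C: "\<forall>ck\<in>set (L[i := (c, Suc k)] @ map (\<lambda>u. (insert n (c - {u}), 0::nat)) (sorted_list_of_set c)).
     fst ck \<subseteq> {0..<Suc n} \<and> card (fst ck) = d+1"
  proof
    fix ck assume "ck \<in> set (L[i := (c, Suc k)] @ map (\<lambda>u. (insert n (c - {u}), 0::nat)) (sorted_list_of_set c))"
    then consider "ck \<in> set (L[i := (c, Suc k)])" | "ck \<in> set (map (\<lambda>u. (insert n (c - {u}), 0::nat)) (sorted_list_of_set c))" by auto
    then show "fst ck \<subseteq> {0..<Suc n} \<and> card (fst ck) = d+1"
    proof cases
      case 1
      then show ?thesis using A[of "fst ck" "snd ck"] by simp
    next
      case 2
      then obtain u where "u \<in> c" "ck = (insert n (c - {u}), 0)" using fc by auto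
      then show ?thesis using B by simp
    qed
  qed
  have D: "length (L[i := (c, Suc k)] @ map (\<lambda>u. (insert n (c - {u}), 0::nat)) (sorted_list_of_set c)) = d+2+Suc t*(d+1)"
    using inv(2) cs(2) by simp
  show ?thesis unfolding s' ck pinv_def using C D inv(1) by simp
qed

lemma inv_init: "pinv d 0 (pran_init d)"
  unfolding pinv_def pran_init_def by auto

lemma pran_props: "(\<forall>s\<in>set_pmf (pran d t). pinv d t s) \<and> finite (set_pmf (pran d t))"
proof (induction t)
  case 0
  then show ?case using inv_init by simp
next
  case (Suc t)
  have fs: "finite (set_pmf (pran_step s))" if "s \<in> set_pmf (pran d t)" for s
  proof -
    obtain n E L where s: "s = (n,E,L)" by (cases s) auto
    show ?thesis using set_step[of d t n E L] Suc that s by auto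
  qed
  show ?case using Suc fs inv_step by (auto simp: set_bind_pmf)
qed

definition Lr :: "nat \<Rightarrow> nat \<Rightarrow> real" where "Lr d t = real (d + 2 + t * (d + 1))"

lemma step_exp:
  assumes "pinv d t s"
  shows "measure_pmf.expectation (pran_step s) (\<lambda>s. real (Nc m s)) =
     real (Nc m s) * (1 - 1 / Lr d t) + (if m > 0 then real (Nc (m-1) s) else 0) / Lr d t
     + (if m = 0 then real (d+1) else 0)"
proof -
  obtain n E L where s: "s = (n,E,L)" by (cases s) auto
  have inv: "n = d+2+t" "length L = d+2+t*(d+1)" "\<And>c' k'. (c',k') \<in> set L \<Longrightarrow> c' \<subseteq> {0..<n} \<and> card c' = d+1"
    using assms(1) s unfolding pinv_def by fastforce+
  define f where "f = (\<lambda>i. (case L ! i of (c, k) \<Rightarrow>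
        (Suc n, E \<union> {{n, u} | u. u \<in> c},
         L[i := (c, Suc k)] @ map (\<lambda>u. (insert n (c - {u}), 0::nat)) (sorted_list_of_set c))))"
  define N where "N = real (Nc m s)"
  define DD where "DD = (if m = 0 then real (d+1) else 0)"
  have ne: "{..<length L} \<noteq> {}" using inv(2) by auto
  have E1: "measure_pmf.expectation (pran_step s) (\<lambda>s. real (Nc m s)) =
      (\<Sum>i<length L. real (Nc m (f i))) / real (length L)"
    unfolding s pran_step_def f_def using ne by (simp add: integral_pmf_of_set)
  have E2: "real (Nc m (f i)) = N - (if snd (L!i) = m then 1 else 0) + (if Suc (snd (L!i)) = m then 1 else 0) + DD"
    if i: "i < length L" for i
  proof -
    obtain c k where ck: "L ! i = (c,k)" by (cases "L!i") auto
    have mem: "(c,k) \<in> set L" using ck i by (metis nth_mem)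
    have cs: "c \<subseteq> {0..<n}" "card c = d+1" using inv(3)[OF mem] by auto
    have fc: "finite c" using cs(1) finite_subset by blast
    have "Nc m (f i) = length (filter (\<lambda>ck. snd ck = m) (L[i := (c, Suc k)]))
       + length (filter (\<lambda>ck. snd ck = m) (map (\<lambda>u. (insert n (c - {u}), 0::nat)) (sorted_list_of_set c)))"
      unfolding f_def Nc_def ck by simp
    also have "length (filter (\<lambda>ck. snd ck = m) (map (\<lambda>u. (insert n (c - {u}), 0::nat)) (sorted_list_of_set c)))
       = (if m = 0 then d+1 else 0)"
      using fc cs(2) by (simp add: filter_map comp_def)
    finally have "real (Nc m (f i)) = real (length (filter (\<lambda>ck. snd ck = m) (L[i := (c, Suc k)]))) + DD"
      unfolding DD_def by simp
    also have "\<dots> = N - (if snd (L!i) = m then 1 else 0) + (if Suc (snd (L!i)) = m then 1 else 0) + DD"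
      unfolding len_filter_upd[OF i] N_def Nc_def s using ck by simp
    finally show ?thesis .
  qed
  have S1: "(\<Sum>i<length L. (if snd (L!i) = m then 1 else 0 :: real)) = N"
    unfolding N_def Nc_def s using sum_ind[of "\<lambda>ck. snd ck = m" L] by simp
  have S2: "(\<Sum>i<length L. (if Suc (snd (L!i)) = m then 1 else 0 :: real)) = (if m > 0 then real (Nc (m-1) s) else 0)"
  proof (cases m)
    case 0 then show ?thesis by simp
  next
    case (Suc m')
    then show ?thesis unfolding Nc_def s using sum_ind[of "\<lambda>ck. snd ck = m'" L] by simp
  qed
  have "(\<Sum>i<length L. real (Nc m (f i))) = (\<Sum>i<length L. N - (if snd (L!i) = m then 1 else 0) + (if Suc (snd (L!i)) = m then 1 else 0) + DD)"
    using E2 by simp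
  also have "\<dots> = real (length L) * N - N + (if m > 0 then real (Nc (m-1) s) else 0) + real (length L) * DD"
    by (simp add: sum.distrib sum_subtractf S1 S2)
  finally have E3: "(\<Sum>i<length L. real (Nc m (f i))) = real (length L) * N - N + (if m > 0 then real (Nc (m-1) s) else 0) + real (length L) * DD" .
  have "length L > 0" using inv(2) by simp
  then have Lpos: "real (length L) > 0" by simp
  have LL: "Lr d t = real (length L)" unfolding Lr_def inv(2) by simp
  show ?thesis unfolding E1 E3 LL N_def[symmetric] DD_def[symmetric] using Lpos
    by (simp add: field_simps)
qed

definition ex :: "nat \<Rightarrow> nat \<Rightarrow> nat \<Rightarrow> real" where
  "ex d t m = measure_pmf.expectation (pran d t) (\<lambda>s. real (Nc m s))"

lemma ex_sum: "ex d t m = (\<Sum>a\<in>set_pmf (pran d t). real (Nc m a) * pmf (pran d t) a)"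
  unfolding ex_def using pran_props[of d t] by (intro integral_measure_pmf_real) auto

lemma ex_rec: "ex d (Suc t) m = ex d t m * (1 - 1 / Lr d t) + (if m > 0 then ex d t (m-1) else 0) / Lr d t
     + (if m = 0 then real (d+1) else 0)"
proof -
  let ?p = "pran d t" let ?A = "set_pmf ?p"
  have fA: "finite ?A" and inv: "\<And>s. s \<in> ?A \<Longrightarrow> pinv d t s" using pran_props[of d t] by auto
  have fs: "finite (set_pmf (pran_step x))" if "x \<in> ?A" for x
  proof -
    obtain n E L where s: "x = (n,E,L)" by (cases x) auto
    show ?thesis using set_step[of d t n E L] inv[OF that] s by auto
  qed
  have "ex d (Suc t) m = (\<Sum>a\<in>?A. pmf ?p a *\<^sub>R measure_pmf.expectation (pran_step a) (\<lambda>s. real (Nc m s)))"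
    unfolding ex_def pran.simps by (rule pmf_expectation_bind[OF fA fs]) auto
  also have "\<dots> = (\<Sum>a\<in>?A. pmf ?p a * (real (Nc m a) * (1 - 1 / Lr d t) + (if m > 0 then real (Nc (m-1) a) else 0) / Lr d t
     + (if m = 0 then real (d+1) else 0)))"
    by (intro sum.cong refl) (simp add: step_exp[OF inv])
  also have "\<dots> = ex d t m * (1 - 1 / Lr d t) + (if m > 0 then ex d t (m-1) else 0) / Lr d t
     + (if m = 0 then real (d+1) else 0) * (\<Sum>a\<in>?A. pmf ?p a)"
    unfolding ex_sum
    by (cases "m = 0") (simp_all add: sum.distrib sum_subtractf sum_distrib_left sum_distrib_right sum_divide_distrib algebra_simps)
  also have "(\<Sum>a\<in>?A. pmf ?p a) = 1" using sum_pmf_eq_1[OF fA] by simp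
  finally show ?thesis by simp
qed

lemma contract:
  fixes x F r :: "nat \<Rightarrow> real"
  assumes rec: "\<And>t. x (Suc t) = (1 - r t) * x t + r t * F t"
    and r1: "\<And>t. 1 / (real t + 2) \<le> r t" and r2: "\<And>t. r t \<le> 1"
    and F: "F \<longlonglongrightarrow> c"
  shows "x \<longlonglongrightarrow> c"
proof (rule LIMSEQ_I)
  fix \<epsilon> :: real assume ep: "\<epsilon> > 0"
  then have "\<epsilon>/2 > 0" by simp
  from LIMSEQ_D[OF F this] obtain N where N: "\<And>t. t \<ge> N \<Longrightarrow> \<bar>F t - c\<bar> < \<epsilon>/2" by auto
  define z where "z t = max (\<bar>x t - c\<bar> - \<epsilon>/2) 0" for t
  have z0: "z t \<ge> 0" for t unfolding z_def by simp
  have stepz: "(real t + 2) * z (Suc t) \<le> (real t + 1) * z t" if t: "t \<ge> N" for t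
  proof -
    have r0: "r t \<ge> 0" proof -
      have "1/(real t+2) > 0" by simp
      then show ?thesis using r1[of t] by linarith
    qed
    have "x (Suc t) - c = (1 - r t) * (x t - c) + r t * (F t - c)" using rec[of t] by (simp add: algebra_simps)
    then have "\<bar>x (Suc t) - c\<bar> \<le> \<bar>(1 - r t) * (x t - c)\<bar> + \<bar>r t * (F t - c)\<bar>"
      by (metis abs_triangle_ineq)
    also have "\<dots> = (1 - r t) * \<bar>x t - c\<bar> + r t * \<bar>F t - c\<bar>"
      using r0 r2[of t] by (simp add: abs_mult)
    also have "\<dots> \<le> (1 - r t) * \<bar>x t - c\<bar> + r t * (\<epsilon>/2)"
      using N[OF t] r0 by (intro add_left_mono mult_left_mono) auto
    finally have "\<bar>x (Suc t) - c\<bar> - \<epsilon>/2 \<le> (1 - r t) * (\<bar>x t - c\<bar> - \<epsilon>/2)"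
      by (simp add: field_simps)
    also have "\<dots> \<le> (1 - r t) * z t" using r2[of t] unfolding z_def
      by (intro mult_left_mono) auto
    finally have zs: "z (Suc t) \<le> (1 - r t) * z t"
      unfolding z_def using r2[of t] z0[of t] unfolding z_def by (simp add: mult_nonneg_nonneg)
    have "(real t + 2) * r t \<ge> 1" using r1[of t] by (simp add: field_simps)
    then have "(real t + 2) * (1 - r t) \<le> real t + 1" by (simp add: algebra_simps)
    have "(real t + 2) * z (Suc t) \<le> (real t + 2) * ((1 - r t) * z t)"
      using zs by (intro mult_left_mono) auto
    also have "\<dots> = ((real t + 2) * (1 - r t)) * z t" by simp
    also have "\<dots> \<le> (real t + 1) * z t"
      using \<open>(real t + 2) * (1 - r t) \<le> real t + 1\<close> z0[of t] by (intro mult_right_mono) auto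
    finally show ?thesis .
  qed
  have bound: "(real t + 1) * z t \<le> (real N + 1) * z N" if "t \<ge> N" for t
    using that
  proof (induction t rule: dec_induct)
    case base then show ?case by simp
  next
    case (step t)
    have "(real (Suc t) + 1) * z (Suc t) = (real t + 2) * z (Suc t)" by simp
    also have "\<dots> \<le> (real t + 1) * z t" using \<open>N \<le> t\<close> by (rule stepz)
    finally show ?case using step.IH by simp
  qed
  obtain M :: nat where M: "2 * (real N + 1) * z N / \<epsilon> < real M" using reals_Archimedean2 by blast
  have "\<forall>n\<ge>max N M. norm (x n - c) < \<epsilon>"
  proof (intro allI impI)
    fix n assume n: "n \<ge> max N M"
    have "(real n + 1) * z n \<le> (real N + 1) * z N" using n by (intro bound) auto
    also have "\<dots> < real M * (\<epsilon>/2)" using M ep by (simp add: field_simps)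
    also have "\<dots> \<le> (real n + 1) * (\<epsilon>/2)" using n ep by (intro mult_right_mono) auto
    finally have "(real n + 1) * z n < (real n + 1) * (\<epsilon>/2)" .
    then have "z n < \<epsilon>/2" using mult_less_cancel_left_pos[of "real n + 1" "z n" "\<epsilon>/2"] by simp
    then show "norm (x n - c) < \<epsilon>" unfolding z_def by (auto simp: max_def split: if_splits)
  qed
  then show "\<exists>no. \<forall>n\<ge>no. norm (x n - c) < \<epsilon>" by blast
qed

lemma alg: "(L::real) > 0 \<Longrightarrow> D \<ge> 0 \<Longrightarrow> (e*(1-1/L) + G)/(L+D) = (1 - (D+1)/(L+D))*(e/L) + (D+1)/(L+D) * (G/(D+1))"
proof -
  assume a: "L > 0" "D \<ge> 0"
  have p1: "L + D > 0" using a by linarith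
  have p2: "D + 1 > 0" using a by linarith
  from a p1 p2 have "L \<noteq> 0" "L + D \<noteq> 0" "D + 1 \<noteq> 0" by auto
  then have h1: "1 - (D+1)/(L+D) = (L-1)/(L+D)" by (simp add: field_simps)
  have h2: "(D+1)/(L+D)*(G/(D+1)) = G/(L+D)" using \<open>D + 1 \<noteq> 0\<close> by simp
  have h3: "e*(1-1/L) = (L-1)*(e/L)" using \<open>L \<noteq> 0\<close> by (simp add: field_simps)
  show ?thesis unfolding h1 h2 h3 by (simp add: add_divide_distrib)
qed


lemma Lr_pos: "Lr d t > 0" unfolding Lr_def by (rule of_nat_0_less_iff[THEN iffD2]) simp

lemma Lr_Suc: "Lr d (Suc t) = Lr d t + real (d+1)" unfolding Lr_def by simp

lemma lim_step:
  assumes "(\<lambda>t. ((if m > 0 then ex d t (m-1) else 0) / Lr d t + (if m = 0 then real (d+1) else 0)) / (real (d+1) + 1)) \<longlonglongrightarrow> c"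
  shows "(\<lambda>t. ex d t m / Lr d t) \<longlonglongrightarrow> c"
proof (rule contract[where r = "\<lambda>t. (real (d+1) + 1) / (Lr d t + real (d+1))", OF _ _ _ assms])
  fix t
  define G where "G = (if m > 0 then ex d t (m-1) else 0) / Lr d t + (if m = 0 then real (d+1) else 0)"
  have "ex d (Suc t) m = ex d t m * (1 - 1 / Lr d t) + G" unfolding G_def ex_rec by (simp add: add.assoc)
  then show "ex d (Suc t) m / Lr d (Suc t) = (1 - (real (d+1) + 1) / (Lr d t + real (d+1))) * (ex d t m / Lr d t)
     + (real (d+1) + 1) / (Lr d t + real (d+1)) * (G / (real (d+1) + 1))"
    unfolding Lr_Suc using alg[OF Lr_pos[of d t], of "real (d+1)" "ex d t m" G] by simp
next
  fix t
  show "1 / (real t + 2) \<le> (real (d+1) + 1) / (Lr d t + real (d+1))"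
  proof -
    have le: "Lr d t + real (d+1) \<le> (real (d+1) + 1) * (real t + 2)" unfolding Lr_def by (simp add: algebra_simps)
    have pos: "0 < Lr d t + real (d+1)" using Lr_pos[of d t] by simp
    have "1 / (real t + 2) = (real (d+1) + 1) / ((real (d+1) + 1) * (real t + 2))" by simp
    also have "\<dots> \<le> (real (d+1) + 1) / (Lr d t + real (d+1))"
      by (rule divide_left_mono[OF le]) (use pos in auto)
    finally show ?thesis .
  qed
next
  fix t
  have "Lr d t + real (d+1) \<ge> real (d+1) + 1" unfolding Lr_def by simp
  then show "(real (d+1) + 1) / (Lr d t + real (d+1)) \<le> 1" by simp
qed

lemma limit_all: "(\<lambda>t. ex d t m / Lr d t) \<longlonglongrightarrow> real (d + 1) / real (d + 2) ^ (m + 1)"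
proof (induction m)
  case 0
  show ?case by (rule lim_step) simp
next
  case (Suc m)
  have "(\<lambda>t. (ex d t m / Lr d t) / (real (d+1) + 1)) \<longlonglongrightarrow> (real (d + 1) / real (d + 2) ^ (m + 1)) / (real (d+1) + 1)"
    by (intro tendsto_divide Suc.IH tendsto_const) simp
  also have "(real (d + 1) / real (d + 2) ^ (m + 1)) / (real (d+1) + 1) = real (d + 1) / real (d + 2) ^ (Suc m + 1)"
    by (simp add: field_simps)
  finally show ?case by (intro lim_step) simp
qed

theorem mainTheorem1:
  fixes d m :: nat
  assumes "d \<ge> 1"
  shows "(\<lambda>t. measure_pmf.expectation (pran d t) (\<lambda>s. real (Nc m s))
               / real (d + 2 + t * (d + 1)))
         \<longlonglongrightarrow> real (d + 1) / real (d + 2) ^ (m + 1)"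
  using limit_all[of d m] unfolding ex_def Lr_def .

end
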